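(* Let $\mathcal{D}$ be an abstract system of proof notations and $s\in\mathbb{N}$. If $\mathcal{D}$ is $s$-bounded, $d\in\mathbb{E}(\mathcal{D})$ and $d\to d'$ (in $\mathbb{E}(\mathcal{D})$), then $\vartheta_d(s)\ge\vartheta_{d'}(s)$.
   Context: An abstract system of proof notations is a set $\mathcal{D}$ with functions $|\cdot|,o(\cdot)\colon\mathcal{D}\to\mathbb{N}\setminus\{0\}$ (size and height) and a relation $\to\subseteq\mathcal{D}\times\mathcal{D}$ such that $d\to d'$ implies $o(d')<o(d)$. The cut-elimination closure $\mathbb{E}(\mathcal{D})$ is the abstract system of formal terms inductively generated by: every $d\in\mathcal{D}$ is in $\mathbb{E}(\mathcal{D})$ (with size and height inherited); if $d,e\in\mathbb{E}(\mathcal{D})$ then $\mathsf{I}d,\ \mathsf{R}de,\ \mathsf{E}d\in\mathbb{E}(\mathcal{D})$ ($\mathsf I,\mathsf R,\mathsf E$ new symbols), with $|\mathsf Id|=|d|+1$, $|\mathsf Rde|=|d|+|e|+1$, $|\mathsf Ed|=|d|+1$, $o(\mathsf Id)=o(d)$, $o(\mathsf Rde)=o(d)+o(e)$, $o(\mathsf Ed)=2^{o(d)}-1$. The relation $\to$ on $\mathbb{E}(\mathcal{D})$ is inductively generated by: $d\to d'$ in $\mathcal{D}$ implies $d\to d'$; $d\to d'$ implies $\mathsf Id\to\mathsf Id'$; $e\to e'$ implies $\mathsf Rde\to\mathsf Rde'$; $d\to d'$ implies $\mathsf Ed\to\mathsf Ed'$; $\mathsf Rde\to\mathsf Id$ always;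 and $d\to d'$ together with $d\to d''$ implies $\mathsf Ed\to\mathsf R(\mathsf Ed')(\mathsf Ed'')$. The size function $\vartheta_d\colon\mathbb{N}\to\mathbb{N}$ for $d\in\mathbb{E}(\mathcal{D})$ is defined by recursion: $\vartheta_d(s)=s$ for $d\in\mathcal{D}$; $\vartheta_{\mathsf Id}(s)=\vartheta_d(s)+1$; $\vartheta_{\mathsf Rde}(s)=\max\{|d|+1+\vartheta_e(s),\ \vartheta_d(s)+1\}$; $\vartheta_{\mathsf Ed}(s)=o(d)\cdot(\vartheta_d(s)+2)$. $\mathcal{D}$ is called $s$-bounded if $|d|\le s$ for all $d\in\mathcal{D}$. *)

theory Defs
  imports Main
begin

definition proof_notation_system ::
  "'a set \<Rightarrow> ('a \<Rightarrow> nat) \<Rightarrow> ('a \<Rightarrow> nat) \<Rightarrow> ('a \<Rightarrow> 'a \<Rightarrow> bool) \<Rightarrow> bool" where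
  "proof_notation_system D sz ht red \<longleftrightarrow>
     (\<forall>d\<in>D. sz d \<ge> 1 \<and> ht d \<ge> 1) \<and>
     (\<forall>d\<in>D. \<forall>d'\<in>D. red d d' \<longrightarrow> ht d' < ht d)"

definition s_bounded :: "'a set \<Rightarrow> ('a \<Rightarrow> nat) \<Rightarrow> nat \<Rightarrow> bool" where
  "s_bounded D sz s \<longleftrightarrow> (\<forall>d\<in>D. sz d \<le> s)"

datatype 'a eterm = Base 'a | Iop "'a eterm" | Rop "'a eterm" "'a eterm" | Eop "'a eterm"

fun inE :: "'a set \<Rightarrow> 'a eterm \<Rightarrow> bool" where
  "inE D (Base d) = (d \<in> D)"
| "inE D (Iop d) = inE D d"
| "inE D (Rop d e) = (inE D d \<and> inE D e)"
| "inE D (Eop d) = inE D d"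

fun esize :: "('a \<Rightarrow> nat) \<Rightarrow> 'a eterm \<Rightarrow> nat" where
  "esize sz (Base d) = sz d"
| "esize sz (Iop d) = esize sz d + 1"
| "esize sz (Rop d e) = esize sz d + esize sz e + 1"
| "esize sz (Eop d) = esize sz d + 1"

fun eheight :: "('a \<Rightarrow> nat) \<Rightarrow> 'a eterm \<Rightarrow> nat" where
  "eheight ht (Base d) = ht d"
| "eheight ht (Iop d) = eheight ht d"
| "eheight ht (Rop d e) = eheight ht d + eheight ht e"
| "eheight ht (Eop d) = 2 ^ eheight ht d - 1"

inductive ered :: "'a set \<Rightarrow> ('a \<Rightarrow> 'a \<Rightarrow> bool) \<Rightarrow> 'a eterm \<Rightarrow> 'a eterm \<Rightarrow> bool"
  for D red where
  base: "d \<in> D \<Longrightarrow> d' \<in> D \<Longrightarrow> red d d' \<Longrightarrow> ered D red (Base d) (Base d')"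
| iI: "ered D red d d' \<Longrightarrow> ered D red (Iop d) (Iop d')"
| rR: "ered D red e e' \<Longrightarrow> ered D red (Rop d e) (Rop d e')"
| eE: "ered D red d d' \<Longrightarrow> ered D red (Eop d) (Eop d')"
| rI: "ered D red (Rop d e) (Iop d)"
| eR: "ered D red d d' \<Longrightarrow> ered D red d d'' \<Longrightarrow> ered D red (Eop d) (Rop (Eop d') (Eop d''))"

fun theta :: "('a \<Rightarrow> nat) \<Rightarrow> ('a \<Rightarrow> nat) \<Rightarrow> 'a eterm \<Rightarrow> nat \<Rightarrow> nat" where
  "theta sz ht (Base d) s = s"
| "theta sz ht (Iop d) s = theta sz ht d s + 1"
| "theta sz ht (Rop d e) s = max (esize sz d + 1 + theta sz ht e s) (theta sz ht d s + 1)"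
| "theta sz ht (Eop d) s = eheight ht d * (theta sz ht d s + 2)"

end

theory Submission
  imports Defs
begin

lemma inE_pres: "ered D red d d' \<Longrightarrow> inE D d \<Longrightarrow> inE D d'"
  by (induction rule: ered.induct) auto

lemma ht_pos: "proof_notation_system D sz ht red \<Longrightarrow> inE D d \<Longrightarrow> eheight ht d \<ge> 1"
proof (induction d)
  case (Eop d)
  then have "eheight ht d \<ge> 1" by simp
  then have "(2::nat) ^ eheight ht d \<ge> 2 ^ 1" by (rule power_increasing) simp
  then show ?case by simp
qed (auto simp: proof_notation_system_def)

lemma arith_aux: "(x::nat) \<le> z \<Longrightarrow> y \<le> z \<Longrightarrow> 1 \<le> x \<Longrightarrow> 1 \<le> y \<Longrightarrow> w = 2 * z
  \<Longrightarrow> (x - 1) + (y - 1) < w - 1"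
  by linarith

lemma ht_dec: "ered D red d d' \<Longrightarrow> proof_notation_system D sz ht red \<Longrightarrow> inE D d
   \<Longrightarrow> eheight ht d' < eheight ht d"
proof (induction rule: ered.induct)
  case (base d d') then show ?case by (auto simp: proof_notation_system_def)
next
  case (eE d d')
  then have "eheight ht d' < eheight ht d" by simp
  then have "(2::nat) ^ eheight ht d' < 2 ^ eheight ht d" by simp
  moreover have "(2::nat) ^ eheight ht d' \<ge> 1" by simp
  ultimately have "(2::nat) ^ eheight ht d' - 1 < 2 ^ eheight ht d - 1" by (rule diff_less_mono)
  then show ?case by (simp only: eheight.simps)
next
  case (rI d e)
  then show ?case using ht_pos[of D sz ht red e] by simp
next
  case (eR d d' d'')
  then have a: "eheight ht d' + 1 \<le> eheight ht d" "eheight ht d'' + 1 \<le> eheight ht d" by auto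
  have "(2::nat) ^ eheight ht d' \<le> 2 ^ (eheight ht d - 1)"
    by (rule power_increasing) (use a in auto)
  moreover have "(2::nat) ^ eheight ht d'' \<le> 2 ^ (eheight ht d - 1)"
    by (rule power_increasing) (use a in auto)
  moreover have "(2::nat) ^ eheight ht d = 2 * 2 ^ (eheight ht d - 1)"
  proof -
    obtain k where "eheight ht d = Suc k" using a(1) by (cases "eheight ht d") auto
    then show ?thesis by simp
  qed
  moreover have "(2::nat) ^ eheight ht d' \<ge> 1" "(2::nat) ^ eheight ht d'' \<ge> 1" by simp_all
  ultimately show ?case using arith_aux by simp
qed auto

lemma size_le: "s_bounded D sz s \<Longrightarrow> proof_notation_system D sz ht red \<Longrightarrow> inE D d
   \<Longrightarrow> esize sz d \<le> theta sz ht d s"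
proof (induction d)
  case (Eop d)
  then have "esize sz d \<le> theta sz ht d s" "eheight ht d \<ge> 1" using ht_pos by auto
  then have "esize sz d + 1 \<le> 1 * (theta sz ht d s + 2)" by simp
  also have "\<dots> \<le> eheight ht d * (theta sz ht d s + 2)" using \<open>eheight ht d \<ge> 1\<close>
    by (rule mult_le_mono1)
  finally show ?case by simp
qed (auto simp: s_bounded_def)

theorem mainTheorem5:
  fixes D :: "'a set" and sz ht :: "'a \<Rightarrow> nat" and red :: "'a \<Rightarrow> 'a \<Rightarrow> bool"
    and s :: nat and d d' :: "'a eterm"
  assumes "proof_notation_system D sz ht red"
    and "s_bounded D sz s"
    and "inE D d"
    and "ered D red d d'"
  shows "theta sz ht d s \<ge> theta sz ht d' s"
  using assms(4,3)
proof (induction rule: ered.induct)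
  case (eR d d' d'')
  let ?o = "eheight ht d" and ?t = "theta sz ht d s"
  have i1: "inE D d'" "inE D d''" using eR inE_pres by auto
  have h: "eheight ht d' + 1 \<le> ?o" "eheight ht d'' + 1 \<le> ?o"
    using ht_dec[OF eR(1) assms(1)] ht_dec[OF eR(2) assms(1)] eR by auto
  have t: "theta sz ht d' s \<le> ?t" "theta sz ht d'' s \<le> ?t" using eR by auto
  have sz: "esize sz d' \<le> theta sz ht d' s" using size_le[OF assms(2,1) i1(1)] .
  have m1: "eheight ht d' * (theta sz ht d' s + 2) \<le> (?o - 1) * (?t + 2)"
    using h t by (intro mult_le_mono) auto
  have m2: "eheight ht d'' * (theta sz ht d'' s + 2) \<le> (?o - 1) * (?t + 2)"
    using h t by (intro mult_le_mono) auto
  have e: "?o * (?t + 2) = (?o - 1) * (?t + 2) + (?t + 2)"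
  proof -
    obtain k where "?o = Suc k" using h(1) by (cases ?o) auto
    then show ?thesis by simp
  qed
  show ?case using m1 m2 e sz t by simp
next
  case (eE d d')
  have "eheight ht d' \<le> eheight ht d" using ht_dec[OF eE(1) assms(1)] eE(3) by (simp only: inE.simps less_imp_le)
  moreover have "theta sz ht d' s \<le> theta sz ht d s" using eE by simp
  ultimately have "eheight ht d' * (theta sz ht d' s + 2) \<le> eheight ht d * (theta sz ht d s + 2)"
    by (intro mult_le_mono add_right_mono)
  then show ?case by (simp only: theta.simps)
next
  case (base d d') then show ?case by simp
next
  case (iI d d') then show ?case by simp
next
  case (rR e e' d) then show ?case by (simp only: theta.simps inE.simps) (simp add: max_def)
next
  case (rI d e) then show ?case by simp
qed

end
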